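(* Let $p$ be a prime, $r\ge1$, $q=p^r$, and $G=(\mathbb{Z}/q\mathbb{Z})^*$. Let $h:G\to\mathbb{R}$ be an even function (i.e. $h(-b)=h(b)$ for all $b\in G$) that is monotonic on $[1,q/2]_\mathbb{Z}=\{i\in\mathbb{Z}:1\le i\le q/2,\ \gcd(i,p)=1\}$ (viewed as a subset of $G$ via reduction mod $q$). If there is $a\in G$ with $a\neq\pm1$ such that $h(ab)=h(b)$ for all $b\in G$, then $h$ is constant. *)

theory Defs
  imports Complex_Main "HOL-Computational_Algebra.Primes"
begin

text \<open>The unit group (Z/qZ)^* represented by the canonical residues 0..q-1 coprime to q.
  Group operations are integer operations followed by reduction mod q.\<close>
definition units_mod :: "int \<Rightarrow> int set" where
  "units_mod q = {b. 0 \<le> b \<and> b < q \<and> coprime b q}"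

end

theory Submission
  imports Defs
begin

definition fd :: "int \<Rightarrow> int \<Rightarrow> int" where "fd q x = min (x mod q) (q - x mod q)"

lemma fd_add: "fd q (x + k*q) = fd q x" by (simp add: fd_def)
lemma fd_mod: "fd q (x mod q) = fd q x" by (simp add: fd_def)
lemma fd_neg: assumes "q > 0" shows "fd q (-x) = fd q x"
proof (cases "x mod q = 0")
  case True then have "(-x) mod q = 0" by (simp add: zmod_zminus1_eq_if)
  then show ?thesis using True by (simp add: fd_def)
next
  case False then have "(-x) mod q = q - x mod q" by (simp add: zmod_zminus1_eq_if)
  then show ?thesis by (simp add: fd_def)
qed
lemma fd_le_abs: assumes "q > 0" shows "fd q x \<le> \<bar>x\<bar>"
proof (cases "x \<ge> 0")
  case True then have "x mod q \<le> x" using assms by (simp add: zmod_le_nonneg_dividend)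
  then show ?thesis using True by (simp add: fd_def)
next
  case False then have "(-x) mod q \<le> -x" using assms by (simp add: zmod_le_nonneg_dividend)
  then have "fd q (-x) \<le> -x" by (simp add: fd_def)
  then show ?thesis using False fd_neg[OF assms] by simp
qed
lemma fd_small: assumes "0 \<le> x" "x < q" shows "fd q x = min x (q - x)"
  using assms by (simp add: fd_def)
lemma cop_iff: assumes "prime p" shows "coprime x (int p) \<longleftrightarrow> \<not> int p dvd x"
proof -
  have pi: "prime (int p)" using assms by simp
  show ?thesis
  proof
    assume "coprime x (int p)" then show "\<not> int p dvd x"
      using pi by (metis coprime_commute not_prime_unit coprime_absorb_left)
  next
    assume "\<not> int p dvd x" then show "coprime x (int p)"
      using pi prime_imp_coprime coprime_commute by blast
  qed
qed

lemma core:
  fixes p r :: nat and q e t s :: int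
  assumes p: "prime p" and r: "r \<ge> 1" and q: "q = int p ^ r"
  and e2: "2 \<le> e" and eq: "2*e \<le> q" and ecop: "coprime e (int p)"
  and t1: "1 \<le> t" and tq: "2*t \<le> q" and tcop: "coprime t (int p)"
  and inv: "\<And>x. 0 \<le> x \<Longrightarrow> x < q \<Longrightarrow> coprime x (int p) \<Longrightarrow> (fd q (e*x) \<le> t \<longleftrightarrow> fd q x \<le> t)"
  and s: "t < s" "2*s \<le> q" "coprime s (int p)"
  shows False
proof -
  have p2: "int p \<ge> 2" using p prime_ge_2_nat by fastforce
  have pdq: "int p dvd q" using q r by (simp add: dvd_power)
  have q0: "q > 0" using e2 eq by linarith
  have "fd q 1 = 1" using q0 e2 eq by (simp add: fd_small)
  moreover have "fd q e = e" using e2 eq by (simp add: fd_small)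
  ultimately have et: "e \<le> t" using inv[of 1] t1 e2 eq by simp
  note ci = cop_iff[OF p]
  have bottom: "q \<le> 2*t + 2*e"
  proof (rule ccontr)
    assume "\<not> q \<le> 2*t + 2*e"
    hence big: "q > 2*t + 2*e" by simp
    have claim: "1 \<le> int n \<Longrightarrow> int n \<le> t \<Longrightarrow> coprime (int n) (int p) \<Longrightarrow> e * int n \<le> t" for n
    proof (induction n rule: less_induct)
      case (less n)
      show ?case
      proof (cases "n = 1")
        case True then show ?thesis using et by simp
      next
        case False
        hence n2: "n \<ge> 2" using less.prems by linarith
        obtain y where y: "y < n" "1 \<le> y" "n - y \<le> 2" "coprime (int y) (int p)"
        proof (cases "p = 2")
          case True
          then have "\<not> 2 dvd int n" using less.prems ci by simp
          then have "n \<ge> 3" using n2 by (cases "n = 2") auto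
          moreover have "\<not> 2 dvd int (n - 2)" using \<open>\<not> 2 dvd int n\<close> \<open>n \<ge> 3\<close>
            by (simp add: of_nat_diff)
          ultimately show ?thesis using that[of "n-2"] True ci by simp
        next
          case False
          show ?thesis
          proof (cases "int p dvd int (n - 1)")
            case False
            then show ?thesis using that[of "n-1"] ci n2 by simp
          next
            case True
            have "n \<noteq> 2"
            proof
              assume "n = 2"
              then have "int p dvd 1" using True by simp
              then have "int p \<le> 1" by (rule zdvd_imp_le) simp
              then show False using p2 by simp
            qed
            hence n3: "n \<ge> 3" using n2 by simp
            have "\<not> int p dvd int (n - 2)"
            proof
              assume "int p dvd int (n - 2)"
              with True have "int p dvd int (n-1) - int (n-2)" by (rule dvd_diff)
              moreover have "int (n-1) - int (n-2) = 1" using n3 by simp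
              ultimately have "int p dvd 1" by simp
              then have "int p \<le> 1" by (rule zdvd_imp_le) simp
              then show False using p2 by simp
            qed
            then show ?thesis using that[of "n-2"] ci n3 by simp
          qed
        qed
        have IH: "e * int y \<le> t" using less.IH[of y] y less.prems by simp
        have "e * int n = e * int y + e * (int n - int y)" by (simp add: algebra_simps)
        moreover have "e * (int n - int y) \<le> e * 2" using y e2 by (intro mult_left_mono) auto
        ultimately have en: "e * int n \<le> t + 2*e" using IH by linarith
        have "fd q (int n) = int n" using less.prems tq by (simp add: fd_small)
        hence "fd q (e * int n) \<le> t" using inv[of "int n"] less.prems tq by simp
        show ?thesis
        proof (rule ccontr)
          assume "\<not> e * int n \<le> t"
          hence "e * int n > t" by simp
          hence "fd q (e * int n) = min (e * int n) (q - e * int n)"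
            using en big t1 by (intro fd_small) auto
          then show False using \<open>fd q (e * int n) \<le> t\<close> \<open>e * int n > t\<close> en big by linarith
        qed
      qed
    qed
    have "e * t \<le> t" using claim[of "nat t"] t1 tq tcop by simp
    moreover have "e * t \<ge> 2 * t" using e2 t1 by (intro mult_right_mono) auto
    ultimately show False using t1 by linarith
  qed
  show False
  proof (cases "p = 2")
    case True
    have qe: "q = 2 ^ r" using q True by simp
    have "r \<noteq> 1" using qe e2 eq by auto
    hence r2: "r \<ge> 2" using r by simp
    have "(4::int) dvd q" unfolding qe using r2
      by (metis le_add_diff_inverse power_add dvd_triv_left numeral_Bit0 power2_eq_square mult_2)
    then obtain K where K: "q = 4*K" by blast
    have eodd: "\<not> 2 dvd e" using ecop ci True by simp
    then obtain j where j: "e = 2*j + 1" by (metis oddE)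
    have sodd: "\<not> 2 dvd s" using s ci True by simp
    have "s \<le> 2*K - 1" using s(2) K sodd by presburger
    hence mt: "2*K - 1 > t" using s by simp
    have "\<not> 2 dvd (2*K - 1)" by presburger
    hence mcop: "coprime (2*K - 1) (int p)" using ci True by simp
    have "fd q (2*K - 1) = 2*K - 1" using K mt t1 by (simp add: fd_small)
    hence "\<not> fd q (e * (2*K - 1)) \<le> t" using inv[of "2*K-1"] mcop mt t1 K by simp
    moreover have "e * (2*K - 1) = (2*K - e) + j * q" using j K by (simp add: algebra_simps)
    ultimately have "\<not> fd q (2*K - e) \<le> t" using fd_add[of q "2*K-e" j] by simp
    moreover have "fd q (2*K - e) \<le> \<bar>2*K - e\<bar>" using fd_le_abs q0 by blast
    ultimately show False using bottom K eq by linarith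
  next
    case False
    have podd: "\<not> 2 dvd int p"
    proof
      assume "2 dvd int p"
      then have "2 dvd p" by presburger
      then show False using p False by (metis prime_nat_iff nat_dvd_1_iff_1 numeral_eq_one_iff semiring_norm(85))
    qed
    have "\<not> 2 dvd q" unfolding q using podd by (simp add: prime_dvd_power_iff)
    then obtain M where M: "q = 2*M + 1" by (metis oddE)
    have mcop: "coprime M (int p)"
    proof -
      have "\<not> int p dvd M"
      proof
        assume "int p dvd M"
        then have "int p dvd q - 2*M" using pdq dvd_diff dvd_mult by blast
        then have "int p dvd 1" using M by simp
        then have "int p \<le> 1" by (rule zdvd_imp_le) simp
        then show False using p2 by simp
      qed
      then show ?thesis using ci by simp
    qed
    have mt: "M > t" using s M by linarith
    have "fd q M = M" using M mt t1 by (simp add: fd_small)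
    hence nm: "\<not> fd q (e * M) \<le> t" using inv[of M] mcop mt t1 M by simp
    show False
    proof (cases "2 dvd e")
      case True
      then obtain k where k: "e = 2*k" by blast
      have "e * M = (-k) + k * q" using k M by (simp add: algebra_simps)
      hence "fd q (e*M) = fd q (-k)" using fd_add[of q "-k" k] by simp
      moreover have "fd q (-k) \<le> \<bar>-k\<bar>" using fd_le_abs q0 by blast
      ultimately show False using nm k et e2 by linarith
    next
      case False
      then obtain k where k: "e = 2*k + 1" by (metis oddE)
      have "e * M = (M - k) + k * q" using k M by (simp add: algebra_simps)
      hence "fd q (e*M) = fd q (M - k)" using fd_add[of q "M-k" k] by simp
      moreover have "fd q (M - k) \<le> \<bar>M - k\<bar>" using fd_le_abs q0 by blast
      moreover have "M - k \<ge> 0" using k eq M e2 by linarith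
      ultimately have mk: "M - k > t" using nm by simp
      have k1: "k \<ge> 1" using k e2 by linarith
      obtain j where j: "j = 1 \<or> j = 2" "coprime (M - j) (int p)" "M - j > t"
      proof (cases "k = 1")
        case True
        have "int p \<noteq> 3"
        proof
          assume "int p = 3" then have "\<not> coprime e 3" using k True by simp
          then show False using ecop \<open>int p = 3\<close> by simp
        qed
        have "\<not> int p dvd M - 1"
        proof
          assume "int p dvd M - 1"
          then have "int p dvd q - 2*(M-1)" using pdq dvd_diff dvd_mult by blast
          then have "int p dvd 3" using M by simp
          then have "int p \<le> 3" by (rule zdvd_imp_le) simp
          moreover have "int p \<noteq> 2" using podd by auto
          ultimately have "int p = 3" using p2 \<open>int p dvd 3\<close> by (smt (verit) dvd_refl)
          then show False using \<open>int p \<noteq> 3\<close> by simp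
        qed
        then show ?thesis using that[of 1] ci mk True by simp
      next
        case False
        show ?thesis
        proof (cases "int p dvd M - 1")
          case False then show ?thesis using that[of 1] ci mk k1 by simp
        next
          case True
          have "\<not> int p dvd M - 2"
          proof
            assume "int p dvd M - 2"
            with True have "int p dvd (M-1) - (M-2)" by (rule dvd_diff)
            then have "int p \<le> 1" by (simp add: zdvd_imp_le)
            then show False using p2 by simp
          qed
          then show ?thesis using that[of 2] ci mk k1 \<open>k \<noteq> 1\<close> by simp
        qed
      qed
      have "fd q (M - j) = min (M - j) (q - (M - j))" using M j t1 by (intro fd_small) auto
      hence "fd q (M - j) = M - j" using M j t1 by auto
      hence nj: "\<not> fd q (e * (M-j)) \<le> t" using inv[of "M-j"] j t1 M by auto
      have "e * (M - j) = (M - k - e*j) + k * q" using k M by (simp add: algebra_simps)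
      hence "fd q (e*(M-j)) = fd q (M - k - e*j)" using fd_add[of q "M - k - e*j" k] by simp
      moreover have "fd q (M - k - e*j) \<le> \<bar>M - k - e*j\<bar>" using fd_le_abs q0 by blast
      ultimately have "\<bar>M - k - e*j\<bar> > t" using nj by linarith
      then show False using j(1) k M bottom mk et by auto
    qed
  qed
qed

lemma main_inc:
  fixes p r :: nat and q a :: int and h :: "int \<Rightarrow> real"
  assumes p: "prime p" and r: "r \<ge> 1" and q: "q = int p ^ r"
    and even: "\<forall>b \<in> units_mod q. h ((- b) mod q) = h b"
    and mono: "monotone_on {i::int. 1 \<le> i \<and> 2 * i \<le> q \<and> coprime i (int p)} (\<le>) (\<le>) h"
    and aU: "a \<in> units_mod q" and a1: "a \<noteq> 1" and aq: "a \<noteq> q - 1"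
    and inv: "\<forall>b \<in> units_mod q. h ((a * b) mod q) = h b"
  shows "\<exists>c. \<forall>b \<in> units_mod q. h b = c"
proof (rule ccontr)
  assume nc: "\<not> ?thesis"
  define S where "S = {i::int. 1 \<le> i \<and> 2 * i \<le> q \<and> coprime i (int p)}"
  have p2: "int p \<ge> 2" using p prime_ge_2_nat by fastforce
  have pdq: "int p dvd q" using q r by (simp add: dvd_power)
  have q2: "q \<ge> 2"
  proof -
    have "int p ^ 1 \<le> int p ^ r" using r p2 by (intro power_increasing) auto
    then have "int p \<le> q" using q by (metis power_one_right)
    then show ?thesis using p2 by linarith
  qed
  hence q0: "q > 0" by simp
  note ci = cop_iff[OF p]
  have cq: "coprime x q \<longleftrightarrow> coprime x (int p)" for x using q r by simp
  have U: "x \<in> units_mod q \<longleftrightarrow> 0 \<le> x \<and> x < q \<and> coprime x (int p)" for x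
    using cq by (simp add: units_mod_def)
  have fdS: "fd q b \<in> S \<and> h (fd q b) = h b" if b: "b \<in> units_mod q" for b
  proof -
    have b0: "0 \<le> b" "b < q" "\<not> int p dvd b" using b U ci by auto
    have "b \<noteq> 0" using b0(3) by auto
    have fb: "fd q b = min b (q - b)" using b0 by (simp add: fd_small)
    show ?thesis
    proof (cases "2*b \<le> q")
      case True then have "fd q b = b" using fb by simp
      then show ?thesis using True b0 \<open>b \<noteq> 0\<close> ci unfolding S_def by auto
    next
      case False then have fe: "fd q b = q - b" using fb by simp
      have "\<not> int p dvd q - b"
      proof
        assume "int p dvd q - b"
        then have "int p dvd q - (q - b)" using pdq dvd_diff by blast
        then show False using b0 by simp
      qed
      moreover have "(-b) mod q = q - b" using b0 \<open>b \<noteq> 0\<close> by (simp add: zmod_zminus1_eq_if)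
      ultimately show ?thesis using fe False b0 even b ci unfolding S_def by auto
    qed
  qed
  have fdS2: "x \<in> S \<Longrightarrow> fd q x = x" for x unfolding S_def by (simp add: fd_small)
  obtain b where bU: "b \<in> units_mod q" and hb: "h b \<noteq> h 1" using nc by blast
  define A where "A = {x \<in> S. h x = h 1}"
  have finA: "finite A" unfolding A_def S_def by (rule finite_subset[of _ "{0..q}"]) auto
  have 1: "1 \<in> S" using q2 unfolding S_def by simp
  hence "1 \<in> A" unfolding A_def by simp
  define t where "t = Max A"
  have tA: "t \<in> A" unfolding t_def using finA \<open>1 \<in> A\<close> by (intro Max_in) auto
  have tmax: "x \<in> A \<Longrightarrow> x \<le> t" for x unfolding t_def using finA by simp
  have char: "fd q x \<le> t \<longleftrightarrow> h x = h 1" if x: "x \<in> units_mod q" for x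
  proof
    assume "h x = h 1"
    then have "fd q x \<in> A" using fdS[OF x] unfolding A_def by simp
    then show "fd q x \<le> t" by (rule tmax)
  next
    assume le: "fd q x \<le> t"
    have fS: "fd q x \<in> S" using fdS[OF x] by simp
    have tS: "t \<in> S" "h t = h 1" using tA unfolding A_def by auto
    have monoS: "monotone_on S (\<le>) (\<le>) h" using mono unfolding S_def .
    have "1 \<le> fd q x" using fS unfolding S_def by simp
    hence "h 1 \<le> h (fd q x)" using monotone_onD[OF monoS 1 fS] by simp
    moreover have "h (fd q x) \<le> h t" using monotone_onD[OF monoS fS tS(1) le] .
    ultimately show "h x = h 1" using tS(2) fdS[OF x] by simp
  qed
  define e where "e = fd q a"
  have eS: "e \<in> S" using fdS[OF aU] e_def by simp
  have a0: "0 \<le> a" "a < q" using aU U by auto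
  have ea: "e = a \<or> e = q - a" using a0 unfolding e_def by (simp add: fd_small min_def)
  have e2: "e \<ge> 2"
  proof -
    have "e \<noteq> 1" using ea a1 aq by auto
    then show ?thesis using eS unfolding S_def by simp
  qed
  have key: "fd q (e * x) = fd q ((a*x) mod q)" for x
  proof (cases "e = a")
    case True then show ?thesis by (simp add: fd_mod)
  next
    case False
    then have "e = q - a" using ea by simp
    then have "e * x = (-(a*x)) + x * q" by (simp add: left_diff_distrib)
    then show ?thesis using fd_add[of q "-(a*x)" x] fd_neg[OF q0] by (simp add: fd_mod)
  qed
  have invf: "fd q (e*x) \<le> t \<longleftrightarrow> fd q x \<le> t"
    if "0 \<le> x" "x < q" "coprime x (int p)" for x
  proof -
    have xU: "x \<in> units_mod q" using that U by simp
    have "coprime (a*x) q" using xU aU unfolding units_mod_def by simp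
    hence "coprime ((a*x) mod q) q" using q0 by (simp add: coprime_mod_left_iff)
    hence axU: "(a*x) mod q \<in> units_mod q" using q0 unfolding units_mod_def by simp
    show ?thesis using key[of x] char[OF axU] char[OF xU] inv xU by simp
  qed
  have sS: "fd q b \<in> S" using fdS[OF bU] by simp
  have st: "t < fd q b" using char[OF bU] hb by linarith
  have tS: "t \<in> S" using tA unfolding A_def by simp
  show False
    using core[OF p r q e2 _ _ _ _ _ invf st] eS tS sS unfolding S_def by auto
qed

theorem lemma4p1:
  fixes p r :: nat and q a :: int and h :: "int \<Rightarrow> real"
  assumes "prime p" and "r \<ge> 1" and "q = int p ^ r"
    and even: "\<forall>b \<in> units_mod q. h ((- b) mod q) = h b"
    and mono: "monotone_on {i::int. 1 \<le> i \<and> 2 * i \<le> q \<and> coprime i (int p)} (\<le>) (\<le>) h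
             \<or> monotone_on {i::int. 1 \<le> i \<and> 2 * i \<le> q \<and> coprime i (int p)} (\<le>) (\<ge>) h"
    and "a \<in> units_mod q" and "a \<noteq> 1" and "a \<noteq> q - 1"
    and inv: "\<forall>b \<in> units_mod q. h ((a * b) mod q) = h b"
  shows "\<exists>c. \<forall>b \<in> units_mod q. h b = c"
  using mono
proof
  assume "monotone_on {i::int. 1 \<le> i \<and> 2 * i \<le> q \<and> coprime i (int p)} (\<le>) (\<le>) h"
  then show ?thesis using main_inc[of p r q h a] assms by blast
next
  assume m: "monotone_on {i::int. 1 \<le> i \<and> 2 * i \<le> q \<and> coprime i (int p)} (\<le>) (\<ge>) h"
  have "monotone_on {i::int. 1 \<le> i \<and> 2 * i \<le> q \<and> coprime i (int p)} (\<le>) (\<le>) (\<lambda>x. - h x)"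
    using m by (auto simp: monotone_on_def)
  then obtain c where "\<forall>b \<in> units_mod q. - h b = c"
    using main_inc[of p r q "\<lambda>x. - h x" a] assms by auto
  then show ?thesis by (intro exI[of _ "-c"]) auto
qed

end
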